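(* For every $n\ge2$, the group $\mathcal{P}(\mathrm{Cr}_n)$ is isomorphic to a semidirect product $\mathbb{Z}_{2n}\rtimes\mathbb{Z}_2$ (namely the dihedral group of order $4n$).
   Context: For $n\ge2$, $\mathrm{Cr}_n$ is the poset $\{x_1,\dots,x_n,y_1,\dots,y_n\}$ whose only relations between distinct elements are $x_i<y_i$ ($1\le i\le n$), $x_{i+1}<y_i$ ($1\le i\le n-1$) and $x_1<y_n$. For a finite poset $X$ and $x<y$, $e_{xy}$ denotes the incidence-algebra basis element (indicator of $(x,y)$), and $B=\{e_{xy}:x<y\}$. A bijection $\theta:B\to B$ is proper if there is an automorphism $\lambda$ of $X$ with $\theta(e_{xy})=e_{\lambda(x)\lambda(y)}$ for all $x<y$, or an anti-automorphism (order-reversing bijection) $\lambda$ of $X$ with $\theta(e_{xy})=e_{\lambda(y)\lambda(x)}$ for all $x<y$; $\mathcal{P}(X)$ is the group (under composition) of proper bijections of $B$. *)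

theory Defs
  imports "HOL-Algebra.Group" "HOL-Library.FuncSet"
begin

text \<open>The crown poset Cr_n. Elements: (False, i) stands for x_i, (True, i) for y_i,
  with 1 \<le> i \<le> n.\<close>

definition crown_carrier :: "nat \<Rightarrow> (bool \<times> nat) set" where
  "crown_carrier n = UNIV \<times> {1..n}"

definition crown_less :: "nat \<Rightarrow> bool \<times> nat \<Rightarrow> bool \<times> nat \<Rightarrow> bool" where
  "crown_less n a b \<longleftrightarrow>
     (\<exists>i j. a = (False, j) \<and> b = (True, i) \<and> i \<in> {1..n} \<and> j \<in> {1..n} \<and>
        (j = i \<or> (i \<le> n - 1 \<and> j = i + 1) \<or> (j = 1 \<and> i = n)))"

text \<open>The basis B = {e_xy : x < y}, with e_xy identified with the pair (x, y).\<close>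
definition crown_basis :: "nat \<Rightarrow> ((bool \<times> nat) \<times> (bool \<times> nat)) set" where
  "crown_basis n = {(x, y). crown_less n x y}"

definition crown_automorphism :: "nat \<Rightarrow> (bool \<times> nat \<Rightarrow> bool \<times> nat) \<Rightarrow> bool" where
  "crown_automorphism n f \<longleftrightarrow> bij_betw f (crown_carrier n) (crown_carrier n) \<and>
     (\<forall>x\<in>crown_carrier n. \<forall>y\<in>crown_carrier n. crown_less n x y \<longleftrightarrow> crown_less n (f x) (f y))"

definition crown_anti_automorphism :: "nat \<Rightarrow> (bool \<times> nat \<Rightarrow> bool \<times> nat) \<Rightarrow> bool" where
  "crown_anti_automorphism n f \<longleftrightarrow> bij_betw f (crown_carrier n) (crown_carrier n) \<and>
     (\<forall>x\<in>crown_carrier n. \<forall>y\<in>crown_carrier n. crown_less n x y \<longleftrightarrow> crown_less n (f y) (f x))"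

definition proper_bijections ::
  "nat \<Rightarrow> (((bool \<times> nat) \<times> (bool \<times> nat)) \<Rightarrow> ((bool \<times> nat) \<times> (bool \<times> nat))) set" where
  "proper_bijections n = {\<theta>. \<theta> \<in> extensional (crown_basis n) \<and>
      bij_betw \<theta> (crown_basis n) (crown_basis n) \<and>
      ((\<exists>f. crown_automorphism n f \<and> (\<forall>(x, y)\<in>crown_basis n. \<theta> (x, y) = (f x, f y))) \<or>
       (\<exists>f. crown_anti_automorphism n f \<and> (\<forall>(x, y)\<in>crown_basis n. \<theta> (x, y) = (f y, f x))))}"

definition proper_group ::
  "nat \<Rightarrow> (((bool \<times> nat) \<times> (bool \<times> nat)) \<Rightarrow> ((bool \<times> nat) \<times> (bool \<times> nat))) monoid" where
  "proper_group n = \<lparr> carrier = proper_bijections n,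
                      mult = (\<lambda>\<theta> \<phi>. compose (crown_basis n) \<theta> \<phi>),
                      one = restrict id (crown_basis n) \<rparr>"

definition semidirect_Zm_Z2 :: "nat \<Rightarrow> (int \<times> int) monoid" where
  "semidirect_Zm_Z2 m = \<lparr> carrier = {0..<int m} \<times> {0..<2},
      mult = (\<lambda>(a, s) (b, t). ((a + (-1) ^ nat s * b) mod int m, (s + t) mod 2)),
      one = (0, 0) \<rparr>"

end

theory Submission
  imports Defs
begin

definition enc :: "int \<Rightarrow> bool \<times> nat" where
  "enc k = (odd k, nat (k div 2) + 1)"
definition dec :: "bool \<times> nat \<Rightarrow> int" where
  "dec p = (if fst p then 2 * int (snd p) - 1 else 2 * int (snd p) - 2)"
definition adj :: "nat \<Rightarrow> int \<Rightarrow> int \<Rightarrow> bool" where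
  "adj n u v \<longleftrightarrow> (u - v) mod (2 * int n) = 1 \<or> (v - u) mod (2 * int n) = 1"

lemma dec_enc: "0 \<le> k \<Longrightarrow> dec (enc k) = k"
  unfolding dec_def enc_def by (auto; presburger)

lemma enc_dec: "p \<in> crown_carrier n \<Longrightarrow> enc (dec p) = p"
  unfolding dec_def enc_def crown_carrier_def by (cases p) auto

lemma dec_range: "p \<in> crown_carrier n \<Longrightarrow> 0 \<le> dec p \<and> dec p < 2 * int n"
  unfolding dec_def crown_carrier_def by (cases p) auto

lemma enc_range: "0 \<le> k \<Longrightarrow> k < 2 * int n \<Longrightarrow> enc k \<in> crown_carrier n"
  unfolding enc_def crown_carrier_def by auto

lemma fst_enc[simp]: "fst (enc k) = odd k"
  unfolding enc_def by simp

lemma mod_shift: "0 \<le> x - k * M \<Longrightarrow> x - k * M < M \<Longrightarrow> x mod M = x - k * (M::int)"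
proof -
  assume a: "0 \<le> x - k * M" "x - k * M < M"
  have "x mod M = ((x - k * M) + k * M) mod M" by simp
  also have "\<dots> = (x - k * M) mod M" by (simp only: mod_mult_self1)
  also have "\<dots> = x - k * M" using a by simp
  finally show ?thesis .
qed

lemma mod_eq1: "(M::int) > 1 \<Longrightarrow> -M < d \<Longrightarrow> d < M \<Longrightarrow> (d mod M = 1 \<longleftrightarrow> d = 1 \<or> d = 1 - M)"
proof (cases "d \<ge> 0")
  case True assume "M > 1" "d < M" then show ?thesis using True by (auto simp: mod_pos_pos_trivial)
next
  case False assume a: "M > 1" "-M < d"
  then have "d mod M = d + M" using False
    using mod_shift[of d "-1" M] by simp
  then show ?thesis using False by auto
qed

lemma cl_enc:
  assumes "n \<ge> 2" "0 \<le> u" "u < 2 * int n" "0 \<le> v" "v < 2 * int n"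
  shows "crown_less n (enc u) (enc v) \<longleftrightarrow> even u \<and> odd v \<and> adj n u v"
proof (cases "even u \<and> odd v")
  case False then show ?thesis unfolding crown_less_def enc_def by auto
next
  case True
  then obtain j i where u: "u = 2 * j" and v: "v = 2 * i + 1" by (meson evenE oddE)
  have ej: "enc u = (False, nat j + 1)" "enc v = (True, nat i + 1)" unfolding u v enc_def by auto
  have j: "0 \<le> j" "j < int n" and i: "0 \<le> i" "i < int n" using assms u v by auto
  have "adj n u v \<longleftrightarrow> (u - v = 1 \<or> u - v = 1 - 2 * int n) \<or> (v - u = 1 \<or> v - u = 1 - 2 * int n)"
  proof -
    have M: "2 * int n > 1" using assms by simp
    have "(u - v) mod (2 * int n) = 1 \<longleftrightarrow> (u - v = 1 \<or> u - v = 1 - 2 * int n)"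
      by (rule mod_eq1[OF M]) (use assms in auto)
    moreover have "(v - u) mod (2 * int n) = 1 \<longleftrightarrow> (v - u = 1 \<or> v - u = 1 - 2 * int n)"
      by (rule mod_eq1[OF M]) (use assms in auto)
    ultimately show ?thesis unfolding adj_def by simp
  qed
  also have "\<dots> \<longleftrightarrow> (j = i + 1 \<or> (j = 0 \<and> i = int n - 1)) \<or> j = i"
    unfolding u v using i j by auto
  finally have "adj n u v \<longleftrightarrow> (j = i + 1 \<or> (j = 0 \<and> i = int n - 1)) \<or> j = i" .
  moreover have "crown_less n (enc u) (enc v) \<longleftrightarrow> (j = i + 1 \<or> (j = 0 \<and> i = int n - 1)) \<or> j = i"
    unfolding ej crown_less_def using i j assms by auto
  ultimately show ?thesis using True by simp
qed


definition gmap :: "nat \<Rightarrow> int \<Rightarrow> int \<Rightarrow> int \<Rightarrow> int" where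
  "gmap n a s k = (a + (-1) ^ nat s * k) mod (2 * int n)"

lemma gmap_range: "n \<ge> 1 \<Longrightarrow> 0 \<le> gmap n a s k \<and> gmap n a s k < 2 * int n"
  unfolding gmap_def by simp

lemma mod_mult_inner: "(a + c * (x mod M)) mod M = (a + c * x) mod (M::int)"
  by (metis mod_add_right_eq mod_mult_right_eq)

lemma sign_add: "s \<in> {0,1} \<Longrightarrow> t \<in> {0,1} \<Longrightarrow>
   ((-1::int) ^ nat ((s + t) mod 2)) = (-1) ^ nat s * (-1) ^ nat t"
  by (elim insertE) (simp_all)

lemma gmap_comp:
  assumes "s \<in> {0,1}" "t \<in> {0,1}"
  shows "gmap n a s (gmap n b t k) = gmap n (a + (-1) ^ nat s * b) ((s + t) mod 2) k"
proof -
  have "gmap n a s (gmap n b t k) = (a + (-1) ^ nat s * (b + (-1) ^ nat t * k)) mod (2 * int n)"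
    unfolding gmap_def by (rule mod_mult_inner)
  also have "a + (-1) ^ nat s * (b + (-1) ^ nat t * k) = (a + (-1) ^ nat s * b) + (-1) ^ nat ((s + t) mod 2) * k"
  proof -
    have e: "\<And>c1 c2 :: int. a + c1 * (b + c2 * k) = (a + c1 * b) + (c1 * c2) * k"
      by (simp add: distrib_left mult.assoc)
    show ?thesis unfolding sign_add[OF assms] by (rule e)
  qed
  finally show ?thesis unfolding gmap_def .
qed

lemma gmap_mod: "gmap n (a mod (2 * int n)) s k = gmap n a s k"
  unfolding gmap_def by (simp add: mod_simps)

lemma even_mod_M: "even (x mod (2 * int n)) \<longleftrightarrow> even (x::int)"
  by (metis dvd_mod_iff dvd_triv_left even_mod_2_iff)

lemma gmap_even: "even (gmap n a s k) \<longleftrightarrow> even (a + k)"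
  unfolding gmap_def even_mod_M by simp

lemma adj_sym: "adj n u v \<longleftrightarrow> adj n v u"
  unfolding adj_def by auto

lemma gdiff: "(gmap n a s u - gmap n a s v) mod (2 * int n) = ((-1) ^ nat s * (u - v)) mod (2 * int n)"
  unfolding gmap_def mod_diff_eq by (simp add: right_diff_distrib)

lemma adj_gmap:
  assumes "s \<in> {0,1}"
  shows "adj n (gmap n a s u) (gmap n a s v) \<longleftrightarrow> adj n u v"
proof -
  have "(gmap n a s u - gmap n a s v) mod (2 * int n) = ((-1) ^ nat s * (u - v)) mod (2 * int n)"
       "(gmap n a s v - gmap n a s u) mod (2 * int n) = ((-1) ^ nat s * (v - u)) mod (2 * int n)"
    by (rule gdiff)+
  moreover have "s = 0 \<or> s = 1" using assms by auto
  ultimately show ?thesis unfolding adj_def by (elim disjE) (simp_all add: adj_def disj_commute)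
qed

lemma adj_nbr:
  assumes "adj n x w" "0 \<le> w" "w < 2 * int n"
  shows "w = (x + 1) mod (2 * int n) \<or> w = (x - 1) mod (2 * int n)"
proof -
  have w: "w = w mod (2 * int n)" using assms by simp
  show ?thesis using assms(1) unfolding adj_def
  proof
    assume "(x - w) mod (2 * int n) = 1"
    then have "(x - (x - w) mod (2 * int n)) mod (2 * int n) = (x - 1) mod (2 * int n)" by simp
    then show ?thesis using w by (simp add: mod_simps)
  next
    assume "(w - x) mod (2 * int n) = 1"
    then have "(x + (w - x) mod (2 * int n)) mod (2 * int n) = (x + 1) mod (2 * int n)" by simp
    then show ?thesis using w by (simp add: mod_simps)
  qed
qed

lemma gsucc0: "(gmap n a 0 j + 1) mod (2 * int n) = gmap n a 0 (j + 1)"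
  "(gmap n a 0 j - 1) mod (2 * int n) = gmap n a 0 (j - 1)"
  "(gmap n a 1 j + 1) mod (2 * int n) = gmap n a 1 (j - 1)"
  "(gmap n a 1 j - 1) mod (2 * int n) = gmap n a 1 (j + 1)"
proof -
  let ?M = "2 * int n"
  show "(gmap n a 0 j + 1) mod ?M = gmap n a 0 (j + 1)"
    unfolding gmap_def by (simp add: mod_add_left_eq add.assoc)
  show "(gmap n a 0 j - 1) mod ?M = gmap n a 0 (j - 1)"
    unfolding gmap_def by (simp add: mod_diff_left_eq add_diff_eq)
  show "(gmap n a 1 j + 1) mod ?M = gmap n a 1 (j - 1)"
    unfolding gmap_def by (simp add: mod_add_left_eq, simp add: algebra_simps)
  show "(gmap n a 1 j - 1) mod ?M = gmap n a 1 (j + 1)"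
    unfolding gmap_def by (simp add: mod_diff_left_eq, simp add: algebra_simps)
qed


definition fmap :: "nat \<Rightarrow> int \<Rightarrow> int \<Rightarrow> bool \<times> nat \<Rightarrow> bool \<times> nat" where
  "fmap n a s p = enc (gmap n a s (dec p))"

definition theta :: "nat \<Rightarrow> int \<Rightarrow> int \<Rightarrow> ((bool \<times> nat) \<times> (bool \<times> nat)) \<Rightarrow> ((bool \<times> nat) \<times> (bool \<times> nat))" where
  "theta n a s = restrict (\<lambda>e. if even a then (fmap n a s (fst e), fmap n a s (snd e))
       else (fmap n a s (snd e), fmap n a s (fst e))) (crown_basis n)"

lemma cl_carrier: "crown_less n x y \<Longrightarrow> x \<in> crown_carrier n \<and> y \<in> crown_carrier n"
  unfolding crown_less_def crown_carrier_def by auto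

lemma cl_dec:
  assumes "n \<ge> 2" "x \<in> crown_carrier n" "y \<in> crown_carrier n"
  shows "crown_less n x y \<longleftrightarrow> even (dec x) \<and> odd (dec y) \<and> adj n (dec x) (dec y)"
  using cl_enc[OF assms(1), of "dec x" "dec y"] dec_range[OF assms(2)] dec_range[OF assms(3)]
    enc_dec[OF assms(2)] enc_dec[OF assms(3)] by simp

lemma fmap_carrier: "n \<ge> 1 \<Longrightarrow> fmap n a s p \<in> crown_carrier n"
  unfolding fmap_def using gmap_range enc_range by blast

lemma dec_fmap: "n \<ge> 1 \<Longrightarrow> dec (fmap n a s p) = gmap n a s (dec p)"
  unfolding fmap_def using gmap_range dec_enc by blast

lemma gmap_id: "0 \<le> k \<Longrightarrow> k < 2 * int n \<Longrightarrow> gmap n 0 0 k = k"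
  unfolding gmap_def by simp

lemma fmap_inv:
  assumes "n \<ge> 1" "s \<in> {0,1}" "b + (-1) ^ nat s * a = 0" "p \<in> crown_carrier n"
  shows "fmap n b s (fmap n a s p) = p"
proof -
  have ss: "(s + s) mod 2 = 0" using assms(2) by auto
  have "fmap n b s (fmap n a s p) = enc (gmap n b s (gmap n a s (dec p)))"
    unfolding fmap_def using dec_fmap[OF assms(1)] unfolding fmap_def by simp
  also have "\<dots> = enc (gmap n 0 0 (dec p))"
    using gmap_comp[OF assms(2) assms(2)] assms(3) ss by simp
  also have "\<dots> = p" using gmap_id dec_range[OF assms(4)] enc_dec[OF assms(4)] by simp
  finally show ?thesis .
qed

lemma fmap_bij:
  assumes "n \<ge> 1" "s \<in> {0,1}"
  shows "bij_betw (fmap n a s) (crown_carrier n) (crown_carrier n)"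
proof (rule bij_betw_byWitness[where f' = "fmap n (- ((-1) ^ nat s * a)) s"])
  have c: "(-1::int) ^ nat s * (-1) ^ nat s = 1" using assms(2) by auto
  have "a + (-1) ^ nat s * - ((-1) ^ nat s * a) = a - ((-1) ^ nat s * (-1) ^ nat s) * a"
    by (simp add: algebra_simps)
  then have e: "a + (-1) ^ nat s * - ((-1) ^ nat s * a) = 0" using c by simp
  show "\<forall>p\<in>crown_carrier n. fmap n (- ((-1) ^ nat s * a)) s (fmap n a s p) = p"
    using fmap_inv[OF assms] by simp
  show "\<forall>p\<in>crown_carrier n. fmap n a s (fmap n (- ((-1) ^ nat s * a)) s p) = p"
    using fmap_inv[OF assms e] by simp
  show "fmap n a s ` crown_carrier n \<subseteq> crown_carrier n" using fmap_carrier assms by blast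
  show "fmap n (- ((-1) ^ nat s * a)) s ` crown_carrier n \<subseteq> crown_carrier n" using fmap_carrier assms by blast
qed

lemma fmap_auto:
  assumes "n \<ge> 2" "s \<in> {0,1}" "even a"
  shows "crown_automorphism n (fmap n a s)"
  unfolding crown_automorphism_def
proof (intro conjI ballI)
  show "bij_betw (fmap n a s) (crown_carrier n) (crown_carrier n)" using fmap_bij assms by simp
  fix x y assume x: "x \<in> crown_carrier n" and y: "y \<in> crown_carrier n"
  have n1: "n \<ge> 1" using assms by simp
  show "crown_less n x y = crown_less n (fmap n a s x) (fmap n a s y)"
    unfolding cl_dec[OF assms(1) x y] cl_dec[OF assms(1) fmap_carrier[OF n1] fmap_carrier[OF n1]]
      dec_fmap[OF n1] gmap_even adj_gmap[OF assms(2)] using assms(3) by simp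
qed

lemma fmap_anti:
  assumes "n \<ge> 2" "s \<in> {0,1}" "odd a"
  shows "crown_anti_automorphism n (fmap n a s)"
  unfolding crown_anti_automorphism_def
proof (intro conjI ballI)
  show "bij_betw (fmap n a s) (crown_carrier n) (crown_carrier n)" using fmap_bij assms by simp
  fix x y assume x: "x \<in> crown_carrier n" and y: "y \<in> crown_carrier n"
  have n1: "n \<ge> 1" using assms by simp
  show "crown_less n x y = crown_less n (fmap n a s y) (fmap n a s x)"
    unfolding cl_dec[OF assms(1) x y] cl_dec[OF assms(1) fmap_carrier[OF n1] fmap_carrier[OF n1]]
      dec_fmap[OF n1] gmap_even adj_gmap[OF assms(2)] using assms(3) adj_sym by auto
qed

lemma auto_pair_bij:
  assumes "crown_automorphism n f"
  shows "bij_betw (\<lambda>e. (f (fst e), f (snd e))) (crown_basis n) (crown_basis n)"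
proof -
  have b: "bij_betw f (crown_carrier n) (crown_carrier n)"
   and r: "\<And>x y. x \<in> crown_carrier n \<Longrightarrow> y \<in> crown_carrier n \<Longrightarrow> crown_less n x y \<longleftrightarrow> crown_less n (f x) (f y)"
    using assms unfolding crown_automorphism_def by auto
  show ?thesis unfolding bij_betw_def
  proof
    show "inj_on (\<lambda>e. (f (fst e), f (snd e))) (crown_basis n)"
    proof (rule inj_onI)
      fix e1 e2 assume e: "e1 \<in> crown_basis n" "e2 \<in> crown_basis n"
        "(f (fst e1), f (snd e1)) = (f (fst e2), f (snd e2))"
      have c: "fst e1 \<in> crown_carrier n" "snd e1 \<in> crown_carrier n"
           "fst e2 \<in> crown_carrier n" "snd e2 \<in> crown_carrier n"
        using e(1,2) cl_carrier unfolding crown_basis_def by auto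
      have i: "inj_on f (crown_carrier n)" using b unfolding bij_betw_def by simp
      have "fst e1 = fst e2" "snd e1 = snd e2" using e(3) inj_onD[OF i] c by auto
      then show "e1 = e2" by (simp add: prod_eq_iff)
    qed
    show "(\<lambda>e. (f (fst e), f (snd e))) ` crown_basis n = crown_basis n"
    proof
      show "(\<lambda>e. (f (fst e), f (snd e))) ` crown_basis n \<subseteq> crown_basis n"
      proof
        fix e' assume "e' \<in> (\<lambda>e. (f (fst e), f (snd e))) ` crown_basis n"
        then obtain x y where e': "e' = (f (fst (x, y)), f (snd (x, y)))" "crown_less n x y"
          unfolding crown_basis_def by auto
        have "x \<in> crown_carrier n" "y \<in> crown_carrier n" using cl_carrier[OF e'(2)] by auto
        then have "crown_less n (f x) (f y)" using r e'(2) by blast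
        then show "e' \<in> crown_basis n" unfolding crown_basis_def e'(1) by simp
      qed
      show "crown_basis n \<subseteq> (\<lambda>e. (f (fst e), f (snd e))) ` crown_basis n"
      proof
        fix e assume "e \<in> crown_basis n"
        then obtain x' y' where e: "e = (x', y')" "crown_less n x' y'" unfolding crown_basis_def by auto
        then have "x' \<in> f ` crown_carrier n" "y' \<in> f ` crown_carrier n"
          using b cl_carrier unfolding bij_betw_def by auto
        then obtain x y where xy: "x \<in> crown_carrier n" "y \<in> crown_carrier n" "x' = f x" "y' = f y" by auto
        then have "(x, y) \<in> crown_basis n" using r e unfolding crown_basis_def by auto
        then show "e \<in> (\<lambda>e. (f (fst e), f (snd e))) ` crown_basis n" using e xy by force
      qed
    qed
  qed
qed

lemma anti_pair_bij:
  assumes "crown_anti_automorphism n f"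
  shows "bij_betw (\<lambda>e. (f (snd e), f (fst e))) (crown_basis n) (crown_basis n)"
proof -
  have b: "bij_betw f (crown_carrier n) (crown_carrier n)"
   and r: "\<And>x y. x \<in> crown_carrier n \<Longrightarrow> y \<in> crown_carrier n \<Longrightarrow> crown_less n x y \<longleftrightarrow> crown_less n (f y) (f x)"
    using assms unfolding crown_anti_automorphism_def by auto
  show ?thesis unfolding bij_betw_def
  proof
    show "inj_on (\<lambda>e. (f (snd e), f (fst e))) (crown_basis n)"
    proof (rule inj_onI)
      fix e1 e2 assume e: "e1 \<in> crown_basis n" "e2 \<in> crown_basis n"
        "(f (snd e1), f (fst e1)) = (f (snd e2), f (fst e2))"
      have c: "fst e1 \<in> crown_carrier n" "snd e1 \<in> crown_carrier n"
           "fst e2 \<in> crown_carrier n" "snd e2 \<in> crown_carrier n"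
        using e(1,2) cl_carrier unfolding crown_basis_def by auto
      have i: "inj_on f (crown_carrier n)" using b unfolding bij_betw_def by simp
      have "fst e1 = fst e2" "snd e1 = snd e2" using e(3) inj_onD[OF i] c by auto
      then show "e1 = e2" by (simp add: prod_eq_iff)
    qed
    show "(\<lambda>e. (f (snd e), f (fst e))) ` crown_basis n = crown_basis n"
    proof
      show "(\<lambda>e. (f (snd e), f (fst e))) ` crown_basis n \<subseteq> crown_basis n"
      proof
        fix e' assume "e' \<in> (\<lambda>e. (f (snd e), f (fst e))) ` crown_basis n"
        then obtain x y where e': "e' = (f (snd (x, y)), f (fst (x, y)))" "crown_less n x y"
          unfolding crown_basis_def by auto
        have "x \<in> crown_carrier n" "y \<in> crown_carrier n" using cl_carrier[OF e'(2)] by auto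
        then have "crown_less n (f y) (f x)" using r e'(2) by blast
        then show "e' \<in> crown_basis n" unfolding crown_basis_def e'(1) by simp
      qed
      show "crown_basis n \<subseteq> (\<lambda>e. (f (snd e), f (fst e))) ` crown_basis n"
      proof
        fix e assume "e \<in> crown_basis n"
        then obtain x' y' where e: "e = (x', y')" "crown_less n x' y'" unfolding crown_basis_def by auto
        then have "x' \<in> f ` crown_carrier n" "y' \<in> f ` crown_carrier n"
          using b cl_carrier unfolding bij_betw_def by auto
        then obtain x y where xy: "x \<in> crown_carrier n" "y \<in> crown_carrier n" "x' = f x" "y' = f y" by auto
        then have "(y, x) \<in> crown_basis n" using r e unfolding crown_basis_def by auto
        then show "e \<in> (\<lambda>e. (f (snd e), f (fst e))) ` crown_basis n" using e xy by force
      qed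
    qed
  qed
qed

lemma theta_proper:
  assumes "n \<ge> 2" "s \<in> {0,1}"
  shows "theta n a s \<in> proper_bijections n"
proof (cases "even a")
  case True
  have A: "crown_automorphism n (fmap n a s)" using fmap_auto assms True by simp
  have "bij_betw (theta n a s) (crown_basis n) (crown_basis n)"
    using auto_pair_bij[OF A] by (rule bij_betw_cong[THEN iffD1, rotated]) (simp add: theta_def True)
  then show ?thesis unfolding proper_bijections_def using A True
    by (auto simp: theta_def)
next
  case False
  have A: "crown_anti_automorphism n (fmap n a s)" using fmap_anti assms False by simp
  have "bij_betw (theta n a s) (crown_basis n) (crown_basis n)"
    using anti_pair_bij[OF A] by (rule bij_betw_cong[THEN iffD1, rotated]) (simp add: theta_def False)
  then show ?thesis unfolding proper_bijections_def using A False
    by (auto simp: theta_def)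
qed


lemma fmap_comp:
  assumes "n \<ge> 1" "s \<in> {0,1}" "t \<in> {0,1}"
  shows "fmap n a s (fmap n b t p) = fmap n ((a + (-1) ^ nat s * b) mod (2 * int n)) ((s + t) mod 2) p"
  unfolding fmap_def dec_fmap[OF assms(1), unfolded fmap_def] gmap_comp[OF assms(2,3)] gmap_mod ..

lemma theta_B:
  assumes "n \<ge> 2" "s \<in> {0,1}" "e \<in> crown_basis n"
  shows "theta n a s e \<in> crown_basis n"
  using theta_proper[OF assms(1,2), of a] assms(3) unfolding proper_bijections_def bij_betw_def by auto

lemma parity_prod: "even ((a + (-1) ^ nat s * b) mod (2 * int n)) \<longleftrightarrow> (even a \<longleftrightarrow> even (b::int))"
  unfolding even_mod_M by simp

lemma theta_mult:
  assumes "n \<ge> 2" "s \<in> {0,1}" "t \<in> {0,1}"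
  shows "theta n ((a + (-1) ^ nat s * b) mod (2 * int n)) ((s + t) mod 2)
       = compose (crown_basis n) (theta n a s) (theta n b t)"
proof
  fix e
  show "theta n ((a + (-1) ^ nat s * b) mod (2 * int n)) ((s + t) mod 2) e
       = compose (crown_basis n) (theta n a s) (theta n b t) e"
  proof (cases "e \<in> crown_basis n")
    case False then show ?thesis by (simp add: theta_def compose_def)
  next
    case True
    have n1: "n \<ge> 1" using assms by simp
    have tb: "theta n b t e \<in> crown_basis n" using theta_B[OF assms(1,3) True] .
    have c: "compose (crown_basis n) (theta n a s) (theta n b t) e = theta n a s (theta n b t e)"
      using True by (simp add: compose_def)
    have 1: "theta n b t e = (if even b then (fmap n b t (fst e), fmap n b t (snd e))
       else (fmap n b t (snd e), fmap n b t (fst e)))" using True by (simp add: theta_def)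
    have 2: "theta n a s (theta n b t e) = (if even a then (fmap n a s (fst (theta n b t e)), fmap n a s (snd (theta n b t e)))
       else (fmap n a s (snd (theta n b t e)), fmap n a s (fst (theta n b t e))))" using tb by (simp add: theta_def)
    show ?thesis unfolding c 2 using True
      by (simp add: 1 theta_def fmap_comp[OF n1 assms(2,3)] parity_prod)
  qed
qed



lemma gvals:
  assumes "0 \<le> a" "a < 2 * int n" "n \<ge> 2"
  shows "gmap n a s 0 = a"
    "gmap n a 0 1 = (if a + 1 = 2 * int n then 0 else a + 1)"
    "gmap n a 1 1 = (if a = 0 then 2 * int n - 1 else a - 1)"
    "gmap n a 0 2 = (if a + 2 < 2 * int n then a + 2 else a + 2 - 2 * int n)"
    "gmap n a 1 2 = (if a \<ge> 2 then a - 2 else a - 2 + 2 * int n)"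
proof -
  let ?M = "2 * int n"
  show "gmap n a s 0 = a" unfolding gmap_def using assms by simp
  show "gmap n a 0 1 = (if a + 1 = ?M then 0 else a + 1)"
    unfolding gmap_def using assms mod_shift[of "a + 1" 1 ?M] mod_shift[of "a + 1" 0 ?M] by auto
  show "gmap n a 1 1 = (if a = 0 then ?M - 1 else a - 1)"
    unfolding gmap_def using assms mod_shift[of "a - 1" "-1" ?M] mod_shift[of "a - 1" 0 ?M] by auto
  show "gmap n a 0 2 = (if a + 2 < ?M then a + 2 else a + 2 - ?M)"
    unfolding gmap_def using assms mod_shift[of "a + 2" 1 ?M] mod_shift[of "a + 2" 0 ?M] by auto
  show "gmap n a 1 2 = (if a \<ge> 2 then a - 2 else a - 2 + ?M)"
    unfolding gmap_def using assms mod_shift[of "a - 2" "-1" ?M] mod_shift[of "a - 2" 0 ?M] by auto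
qed

lemma fmap_enc: "n \<ge> 1 \<Longrightarrow> 0 \<le> k \<Longrightarrow> fmap n a s (enc k) = enc (gmap n a s k)"
  unfolding fmap_def using dec_enc by simp

lemma e1_B: "n \<ge> 2 \<Longrightarrow> (enc 0, enc 1) \<in> crown_basis n"
  unfolding crown_basis_def using cl_enc[of n 0 1] unfolding adj_def by auto

lemma e2_B: "n \<ge> 2 \<Longrightarrow> (enc 2, enc 1) \<in> crown_basis n"
  unfolding crown_basis_def using cl_enc[of n 2 1] unfolding adj_def by auto

lemma theta_inj:
  assumes "n \<ge> 2" "0 \<le> a" "a < 2 * int n" "0 \<le> b" "b < 2 * int n" "s \<in> {0,1}" "t \<in> {0,1}"
    and eq: "theta n a s = theta n b t"
  shows "a = b \<and> s = t"
proof -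
  have n1: "n \<ge> 1" using assms by simp
  define P where "P = (\<lambda>a s. (if even a then (gmap n a s 0, gmap n a s 1) else (gmap n a s 1, gmap n a s 0)))"
  define Q where "Q = (\<lambda>a s. (if even a then (gmap n a s 2, gmap n a s 1) else (gmap n a s 1, gmap n a s 2)))"
  have dd: "\<And>a s k. dec (enc (gmap n a s k)) = gmap n a s k" using dec_enc gmap_range n1 by blast
  have t1: "\<And>a s. theta n a s (enc 0, enc 1) = (if even a then (enc (gmap n a s 0), enc (gmap n a s 1))
        else (enc (gmap n a s 1), enc (gmap n a s 0)))"
    using e1_B[OF assms(1)] by (simp add: theta_def fmap_enc[OF n1])
  have t2: "\<And>a s. theta n a s (enc 2, enc 1) = (if even a then (enc (gmap n a s 2), enc (gmap n a s 1))
        else (enc (gmap n a s 1), enc (gmap n a s 2)))"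
    using e2_B[OF assms(1)] by (simp add: theta_def fmap_enc[OF n1])
  have "P a s = P b t" using arg_cong[OF eq, of "\<lambda>f. map_prod dec dec (f (enc 0, enc 1))"]
    unfolding t1 P_def by (simp add: dd split: if_splits)
  moreover have "Q a s = Q b t" using arg_cong[OF eq, of "\<lambda>f. map_prod dec dec (f (enc 2, enc 1))"]
    unfolding t2 Q_def by (simp add: dd split: if_splits)
  ultimately have PQ: "P a s = P b t" "Q a s = Q b t" by simp_all
  have SP: "\<And>a s. {fst (P a s), snd (P a s)} = {gmap n a s 0, gmap n a s 1}"
    unfolding P_def by auto
  have SQ: "\<And>a s. {fst (Q a s), snd (Q a s)} = {gmap n a s 2, gmap n a s 1}"
    unfolding Q_def by auto
  have S1: "{a, gmap n a s 1} = {b, gmap n b t 1}" using SP[of a s] SP[of b t] PQ(1)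
    gvals(1)[OF assms(2,3,1)] gvals(1)[OF assms(4,5,1)] by simp
  have S2: "{gmap n a s 2, gmap n a s 1} = {gmap n b t 2, gmap n b t 1}" using SQ[of a s] SQ[of b t] PQ(2) by simp
  have st: "s = 0 \<or> s = 1" "t = 0 \<or> t = 1" using assms by auto
  have M4: "2 * int n \<ge> 4" using assms(1) by simp
  have na1: "gmap n a s 1 \<noteq> a"
    using st(1)
  proof (elim disjE)
    assume "s = 0" then show ?thesis using gvals(2)[OF assms(2,3,1)] M4 assms(2,3) by (simp split: if_splits)
  next
    assume "s = 1" then show ?thesis using gvals(3)[OF assms(2,3,1)] M4 assms(2,3) by (simp split: if_splits)
  qed
  have nb2: "gmap n b t 2 \<noteq> b"
    using st(2)
  proof (elim disjE)
    assume "t = 0" then show ?thesis using gvals(4)[OF assms(4,5,1)] M4 assms(4,5) by (simp split: if_splits)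
  next
    assume "t = 1" then show ?thesis using gvals(5)[OF assms(4,5,1)] M4 assms(4,5) by (simp split: if_splits)
  qed
  have A1: "gmap n a s 1 = gmap n b t 1" using S1 S2 nb2 by (auto simp: doubleton_eq_iff)
  then have ab: "a = b" using S1 na1 by (auto simp: doubleton_eq_iff)
  have "s = t"
  proof (rule ccontr)
    assume "s \<noteq> t"
    then have "(s = 0 \<and> t = 1) \<or> (s = 1 \<and> t = 0)" using st by auto
    then have "gmap n a s 1 \<noteq> gmap n a t 1" using gvals(2,3)[OF assms(2,3,1)] M4 assms(2,3)
      by (auto split: if_splits)
    then show False using A1 ab by simp
  qed
  then show ?thesis using ab by simp
qed


lemma adj_succ: "n \<ge> 1 \<Longrightarrow> adj n k (k + 1)"
  unfolding adj_def by simp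

lemma gmap_succ:
  assumes "s \<in> {0,1}"
  shows "{(gmap n a s j + 1) mod (2 * int n), (gmap n a s j - 1) mod (2 * int n)}
       = {gmap n a s (j + 1), gmap n a s (j - 1)}"
  using assms gsucc0 by auto

lemma classify:
  assumes n: "n \<ge> 2"
    and rng: "\<And>k. 0 \<le> k \<Longrightarrow> k < 2 * int n \<Longrightarrow> 0 \<le> F k \<and> F k < 2 * int n"
    and inj: "inj_on F {0..<2 * int n}"
    and ad: "\<And>u v. 0 \<le> u \<Longrightarrow> u < 2 * int n \<Longrightarrow> 0 \<le> v \<Longrightarrow> v < 2 * int n \<Longrightarrow> adj n u v \<Longrightarrow> adj n (F u) (F v)"
  shows "\<exists>a s. 0 \<le> a \<and> a < 2 * int n \<and> s \<in> {0,1} \<and> (\<forall>k. 0 \<le> k \<and> k < 2 * int n \<longrightarrow> F k = gmap n a s k)"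
proof -
  let ?M = "2 * int n"
  have n1: "n \<ge> 1" using n by simp
  define a where "a = F 0"
  have a: "0 \<le> a" "a < ?M" using rng[of 0] n unfolding a_def by auto
  have "adj n (F 0) (F 1)" using ad[of 0 1] adj_succ[OF n1, of 0] n by simp
  then have "F 1 = (a + 1) mod ?M \<or> F 1 = (a - 1) mod ?M"
    using adj_nbr rng[of 1] n unfolding a_def by auto
  then obtain s where s: "s \<in> {0,1}" "F 1 = gmap n a s 1"
    unfolding gmap_def by (metis insertCI power_0 power_one_right mult_1 mult_1_right nat_0 nat_one_as_int
       diff_conv_add_uminus mult_minus1)
  have F0: "F 0 = gmap n a s 0" using gvals[OF a n] unfolding a_def by simp
  have claim: "int j + 1 < ?M \<longrightarrow> F (int j) = gmap n a s (int j) \<and> F (int j + 1) = gmap n a s (int j + 1)" for j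
  proof (induction j)
    case 0 then show ?case using F0 s by simp
  next
    case (Suc j)
    show ?case
    proof
      assume j: "int (Suc j) + 1 < ?M"
      then have IH: "F (int j) = gmap n a s (int j)" "F (int j + 1) = gmap n a s (int j + 1)" using Suc by auto
      have "adj n (F (int j + 1)) (F (int j + 2))"
        using ad[of "int j + 1" "int j + 2"] adj_succ[OF n1, of "int j + 1"] j by (simp add: add.assoc)
      then have "F (int j + 2) = (gmap n a s (int j + 1) + 1) mod ?M \<or> F (int j + 2) = (gmap n a s (int j + 1) - 1) mod ?M"
        using adj_nbr rng[of "int j + 2"] j IH by auto
      then have "F (int j + 2) \<in> {gmap n a s (int j + 1 + 1), gmap n a s (int j + 1 - 1)}"
        using gmap_succ[OF s(1)] by blast
      moreover have "F (int j + 2) \<noteq> F (int j)"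
        using inj_onD[OF inj, of "int j + 2" "int j"] j by auto
      ultimately have "F (int j + 2) = gmap n a s (int j + 2)" using IH by (auto simp: add.assoc)
      moreover have h: "int (Suc j) = int j + 1" "int j + 1 + 1 = int j + 2" by simp_all
      ultimately show "F (int (Suc j)) = gmap n a s (int (Suc j)) \<and> F (int (Suc j) + 1) = gmap n a s (int (Suc j) + 1)"
        using IH unfolding h by blast
    qed
  qed
  have "\<forall>k. 0 \<le> k \<and> k < ?M \<longrightarrow> F k = gmap n a s k"
  proof (intro allI impI)
    fix k assume k: "0 \<le> k \<and> k < ?M"
    show "F k = gmap n a s k"
    proof (cases "k + 1 < ?M")
      case True then show ?thesis using claim[of "nat k"] k by simp
    next
      case False
      then have "k = int (nat (?M - 2)) + 1" using k n by simp
      then show ?thesis using claim[of "nat (?M - 2)"] n by simp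
    qed
  qed
  then show ?thesis using a s by blast
qed


lemma cl_fst: "crown_less n x y \<Longrightarrow> \<not> fst x \<and> fst y"
  unfolding crown_less_def by auto

lemma adj_parity: "adj n u v \<Longrightarrow> odd (u - v)"
proof -
  assume "adj n u v"
  then have "odd ((u - v) mod (2 * int n)) \<or> odd ((v - u) mod (2 * int n))" unfolding adj_def by auto
  then show ?thesis unfolding even_mod_M by (metis even_minus minus_diff_eq)
qed

lemma F_props:
  assumes n: "n \<ge> 2" and b: "bij_betw f (crown_carrier n) (crown_carrier n)"
    and r: "\<And>x y. x \<in> crown_carrier n \<Longrightarrow> y \<in> crown_carrier n \<Longrightarrow> crown_less n x y \<Longrightarrow>
          crown_less n (f x) (f y) \<or> crown_less n (f y) (f x)"
  defines "F \<equiv> \<lambda>k. dec (f (enc k))"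
  shows "\<And>k. 0 \<le> k \<Longrightarrow> k < 2 * int n \<Longrightarrow> 0 \<le> F k \<and> F k < 2 * int n"
    and "inj_on F {0..<2 * int n}"
    and "\<And>u v. 0 \<le> u \<Longrightarrow> u < 2 * int n \<Longrightarrow> 0 \<le> v \<Longrightarrow> v < 2 * int n \<Longrightarrow> adj n u v \<Longrightarrow> adj n (F u) (F v)"
    and "\<And>k. 0 \<le> k \<Longrightarrow> k < 2 * int n \<Longrightarrow> f (enc k) = enc (F k)"
proof -
  have fc: "\<And>k. 0 \<le> k \<Longrightarrow> k < 2 * int n \<Longrightarrow> f (enc k) \<in> crown_carrier n"
    using b enc_range unfolding bij_betw_def by blast
  show rg: "\<And>k. 0 \<le> k \<Longrightarrow> k < 2 * int n \<Longrightarrow> 0 \<le> F k \<and> F k < 2 * int n"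
    unfolding F_def using fc dec_range by blast
  show fe: "\<And>k. 0 \<le> k \<Longrightarrow> k < 2 * int n \<Longrightarrow> f (enc k) = enc (F k)"
    unfolding F_def using fc enc_dec by metis
  show "inj_on F {0..<2 * int n}"
  proof (rule inj_onI)
    fix u v assume u: "u \<in> {0..<2 * int n}" and v: "v \<in> {0..<2 * int n}" and e: "F u = F v"
    have "f (enc u) = f (enc v)" using fe[of u] fe[of v] u v e by simp
    then have "enc u = enc v" using b enc_range u v unfolding bij_betw_def inj_on_def by auto
    then show "u = v" using dec_enc u v by (metis atLeastLessThan_iff)
  qed
  have one: "adj n (F u) (F v)" if uv: "0 \<le> u" "u < 2 * int n" "0 \<le> v" "v < 2 * int n" "adj n u v" "even u" for u v
  proof -
    have "odd v" using adj_parity[OF uv(5)] uv(6) by simp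
    then have "crown_less n (enc u) (enc v)" using cl_enc[OF n uv(1-4)] uv by simp
    then have "crown_less n (f (enc u)) (f (enc v)) \<or> crown_less n (f (enc v)) (f (enc u))"
      using r enc_range uv by blast
    then have "crown_less n (enc (F u)) (enc (F v)) \<or> crown_less n (enc (F v)) (enc (F u))"
      using fe uv by simp
    then show ?thesis using cl_enc[OF n] rg uv adj_sym by blast
  qed
  show "\<And>u v. 0 \<le> u \<Longrightarrow> u < 2 * int n \<Longrightarrow> 0 \<le> v \<Longrightarrow> v < 2 * int n \<Longrightarrow> adj n u v \<Longrightarrow> adj n (F u) (F v)"
  proof -
    fix u v assume uv: "0 \<le> u" "u < 2 * int n" "0 \<le> v" "v < 2 * int n" "adj n u v"
    show "adj n (F u) (F v)"
    proof (cases "even u")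
      case True then show ?thesis using one uv by blast
    next
      case False
      then have "even v" using adj_parity[OF uv(5)] by simp
      then show ?thesis using one[of v u] uv adj_sym by blast
    qed
  qed
qed

lemma proper_surj:
  assumes n: "n \<ge> 2" and th: "\<theta> \<in> proper_bijections n"
  shows "\<exists>a s. 0 \<le> a \<and> a < 2 * int n \<and> s \<in> {0,1} \<and> \<theta> = theta n a s"
proof -
  have ext: "\<theta> \<in> extensional (crown_basis n)" using th unfolding proper_bijections_def by simp
  have n1: "n \<ge> 1" using n by simp
  have e1: "crown_less n (enc 0) (enc 1)" using e1_B[OF n] unfolding crown_basis_def by simp
  have fa: "f p = fmap n a s p" if F: "\<forall>k. 0 \<le> k \<and> k < 2 * int n \<longrightarrow> dec (f (enc k)) = gmap n a s k"
     and b: "bij_betw f (crown_carrier n) (crown_carrier n)" and p: "p \<in> crown_carrier n" for f a s p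
  proof -
    have "f p = enc (dec (f p))" using b p enc_dec unfolding bij_betw_def by (metis image_eqI)
    also have "\<dots> = enc (dec (f (enc (dec p))))" using enc_dec[OF p] by simp
    also have "\<dots> = fmap n a s p" using F dec_range[OF p] unfolding fmap_def by simp
    finally show ?thesis .
  qed
  from th consider (A) f where "crown_automorphism n f" "\<forall>(x, y)\<in>crown_basis n. \<theta> (x, y) = (f x, f y)"
    | (B) f where "crown_anti_automorphism n f" "\<forall>(x, y)\<in>crown_basis n. \<theta> (x, y) = (f y, f x)"
    unfolding proper_bijections_def by blast
  then show ?thesis
  proof cases
    case A
    have b: "bij_betw f (crown_carrier n) (crown_carrier n)"
     and r: "\<And>x y. x \<in> crown_carrier n \<Longrightarrow> y \<in> crown_carrier n \<Longrightarrow> crown_less n x y \<longleftrightarrow> crown_less n (f x) (f y)"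
      using A unfolding crown_automorphism_def by auto
    have rr: "\<And>x y. x \<in> crown_carrier n \<Longrightarrow> y \<in> crown_carrier n \<Longrightarrow> crown_less n x y \<Longrightarrow>
          crown_less n (f x) (f y) \<or> crown_less n (f y) (f x)" using r by blast
    note FP = F_props[OF n b rr]
    obtain a s where as: "0 \<le> a" "a < 2 * int n" "s \<in> {0,1}"
       and F: "\<forall>k. 0 \<le> k \<and> k < 2 * int n \<longrightarrow> dec (f (enc k)) = gmap n a s k"
      using classify[OF n FP(1) FP(2) FP(3)] by blast
    have "crown_less n (f (enc 0)) (f (enc 1))" using r e1 cl_carrier by blast
    then have "\<not> fst (f (enc 0))" using cl_fst by blast
    moreover have "f (enc 0) = enc a" using fa[OF F b enc_range[of 0 n]] n fmap_enc[OF n1] gvals[OF as(1,2) n] by simp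
    ultimately have ev: "even a" by simp
    have "\<theta> = theta n a s"
    proof
      fix e show "\<theta> e = theta n a s e"
      proof (cases "e \<in> crown_basis n")
        case True
        then have "fst e \<in> crown_carrier n" "snd e \<in> crown_carrier n" using cl_carrier unfolding crown_basis_def by auto
        then show ?thesis using A(2) True ev fa[OF F b] unfolding theta_def by (cases e) auto
      next
        case False then show ?thesis using extensional_arb[OF ext False] by (simp add: theta_def)
      qed
    qed
    then show ?thesis using as by blast
  next
    case B
    have b: "bij_betw f (crown_carrier n) (crown_carrier n)"
     and r: "\<And>x y. x \<in> crown_carrier n \<Longrightarrow> y \<in> crown_carrier n \<Longrightarrow> crown_less n x y \<longleftrightarrow> crown_less n (f y) (f x)"
      using B unfolding crown_anti_automorphism_def by auto
    have rr: "\<And>x y. x \<in> crown_carrier n \<Longrightarrow> y \<in> crown_carrier n \<Longrightarrow> crown_less n x y \<Longrightarrow>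
          crown_less n (f x) (f y) \<or> crown_less n (f y) (f x)" using r by blast
    note FP = F_props[OF n b rr]
    obtain a s where as: "0 \<le> a" "a < 2 * int n" "s \<in> {0,1}"
       and F: "\<forall>k. 0 \<le> k \<and> k < 2 * int n \<longrightarrow> dec (f (enc k)) = gmap n a s k"
      using classify[OF n FP(1) FP(2) FP(3)] by blast
    have "crown_less n (f (enc 1)) (f (enc 0))" using r e1 cl_carrier by blast
    then have "fst (f (enc 0))" using cl_fst by blast
    moreover have "f (enc 0) = enc a" using fa[OF F b enc_range[of 0 n]] n fmap_enc[OF n1] gvals[OF as(1,2) n] by simp
    ultimately have ev: "odd a" by simp
    have "\<theta> = theta n a s"
    proof
      fix e show "\<theta> e = theta n a s e"
      proof (cases "e \<in> crown_basis n")
        case True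
        then have "fst e \<in> crown_carrier n" "snd e \<in> crown_carrier n" using cl_carrier unfolding crown_basis_def by auto
        then show ?thesis using B(2) True ev fa[OF F b] unfolding theta_def by (cases e) auto
      next
        case False then show ?thesis using extensional_arb[OF ext False] by (simp add: theta_def)
      qed
    qed
    then show ?thesis using as by blast
  qed
qed


lemma b01: "0 \<le> (b::int) \<Longrightarrow> b < 2 \<Longrightarrow> b = 0 \<or> b = 1"
  by arith

lemma iso_sym_plain:
  assumes "h \<in> iso G H"
    and cl: "\<And>x y. x \<in> carrier G \<Longrightarrow> y \<in> carrier G \<Longrightarrow> x \<otimes>\<^bsub>G\<^esub> y \<in> carrier G"
  shows "inv_into (carrier G) h \<in> iso H G"
proof -
  have h: "h \<in> hom G H" "bij_betw h (carrier G) (carrier H)"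
    using assms by (auto simp add: iso_def)
  then have HG: "bij_betw (inv_into (carrier G) h) (carrier H) (carrier G)"
    by (simp add: bij_betw_inv_into)
  have *: "\<And>x. x \<in> carrier H \<Longrightarrow> inv_into (carrier G) h x \<in> carrier G"
    by (meson HG bij_betwE)
  have "inv_into (carrier G) h \<in> hom H G"
    unfolding hom_def
  proof safe
    show "\<And>x. x \<in> carrier H \<Longrightarrow> inv_into (carrier G) h x \<in> carrier G" by (rule *)
    show "inv_into (carrier G) h (x \<otimes>\<^bsub>H\<^esub> y) = inv_into (carrier G) h x \<otimes>\<^bsub>G\<^esub> inv_into (carrier G) h y"
      if "x \<in> carrier H" "y \<in> carrier H" for x y
    proof (rule inv_into_f_eq)
      show "inj_on h (carrier G)"
        using bij_betw_def h(2) by blast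
      show "inv_into (carrier G) h x \<otimes>\<^bsub>G\<^esub> inv_into (carrier G) h y \<in> carrier G"
        using cl * that by blast
      show "h (inv_into (carrier G) h x \<otimes>\<^bsub>G\<^esub> inv_into (carrier G) h y) = x \<otimes>\<^bsub>H\<^esub> y"
        using h bij_betw_inv_into_right [of h] unfolding hom_def by (simp add: "*" that)
    qed
  qed
  then show ?thesis
    by (simp add: iso_def bij_betw_inv_into h)
qed


theorem proposition4p11:
  fixes n :: nat
  assumes "n \<ge> 2"
  shows "proper_group n \<cong> semidirect_Zm_Z2 (2 * n)"
proof -
  have n: "n \<ge> 2" by (rule assms)
  define h where "h = (\<lambda>x :: int \<times> int. theta n (fst x) (snd x))"
  have carS: "carrier (semidirect_Zm_Z2 (2 * n)) = {0..<2 * int n} \<times> {0..<2}"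
    by (simp add: semidirect_Zm_Z2_def)
  have s01: "\<And>s::int. s \<in> {0..<2} \<longleftrightarrow> s \<in> {0,1}" by auto
  have mulS: "\<And>a s b t. (a, s) \<otimes>\<^bsub>semidirect_Zm_Z2 (2 * n)\<^esub> (b, t) = ((a + (-1) ^ nat s * b) mod (2 * int n), (s + t) mod 2)"
    by (simp add: semidirect_Zm_Z2_def)
  have cl: "\<And>x y. x \<in> carrier (semidirect_Zm_Z2 (2 * n)) \<Longrightarrow> y \<in> carrier (semidirect_Zm_Z2 (2 * n))
      \<Longrightarrow> x \<otimes>\<^bsub>semidirect_Zm_Z2 (2 * n)\<^esub> y \<in> carrier (semidirect_Zm_Z2 (2 * n))"
  proof -
    fix x y assume "x \<in> carrier (semidirect_Zm_Z2 (2 * n))" "y \<in> carrier (semidirect_Zm_Z2 (2 * n))"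
    show "x \<otimes>\<^bsub>semidirect_Zm_Z2 (2 * n)\<^esub> y \<in> carrier (semidirect_Zm_Z2 (2 * n))"
      using n by (cases x, cases y) (simp add: mulS carS)
  qed
  have hom: "h \<in> hom (semidirect_Zm_Z2 (2 * n)) (proper_group n)"
    unfolding hom_def
  proof (intro CollectI conjI ballI)
    show "h \<in> carrier (semidirect_Zm_Z2 (2 * n)) \<rightarrow> carrier (proper_group n)"
      unfolding h_def carS using theta_proper[OF n] s01 by (auto simp: proper_group_def)
    fix x y assume x: "x \<in> carrier (semidirect_Zm_Z2 (2 * n))" and y: "y \<in> carrier (semidirect_Zm_Z2 (2 * n))"
    obtain a s where xs: "x = (a, s)" "s \<in> {0,1}" using x carS b01 by (cases x) auto
    obtain b t where yt: "y = (b, t)" "t \<in> {0,1}" using y carS b01 by (cases y) auto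
    show "h (x \<otimes>\<^bsub>semidirect_Zm_Z2 (2 * n)\<^esub> y) = h x \<otimes>\<^bsub>proper_group n\<^esub> h y"
      unfolding xs yt mulS h_def using theta_mult[OF n xs(2) yt(2)] by (simp add: proper_group_def)
  qed
  have bij: "bij_betw h (carrier (semidirect_Zm_Z2 (2 * n))) (carrier (proper_group n))"
    unfolding bij_betw_def
  proof
    show "inj_on h (carrier (semidirect_Zm_Z2 (2 * n)))"
    proof (rule inj_onI)
      fix x y assume x: "x \<in> carrier (semidirect_Zm_Z2 (2 * n))" and y: "y \<in> carrier (semidirect_Zm_Z2 (2 * n))"
        and e: "h x = h y"
      obtain a s where xs: "x = (a, s)" "s \<in> {0,1}" "0 \<le> a" "a < 2 * int n" using x carS b01 by (cases x) auto
      obtain b t where yt: "y = (b, t)" "t \<in> {0,1}" "0 \<le> b" "b < 2 * int n" using y carS b01 by (cases y) auto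
      show "x = y" using theta_inj[OF n xs(3,4) yt(3,4) xs(2) yt(2)] e unfolding h_def xs yt by simp
    qed
    show "h ` carrier (semidirect_Zm_Z2 (2 * n)) = carrier (proper_group n)"
    proof
      show "h ` carrier (semidirect_Zm_Z2 (2 * n)) \<subseteq> carrier (proper_group n)"
        unfolding h_def carS using theta_proper[OF n] s01 by (auto simp: proper_group_def)
      show "carrier (proper_group n) \<subseteq> h ` carrier (semidirect_Zm_Z2 (2 * n))"
      proof
        fix \<theta> assume "\<theta> \<in> carrier (proper_group n)"
        then have "\<theta> \<in> proper_bijections n" by (simp add: proper_group_def)
        then obtain a s where "0 \<le> a" "a < 2 * int n" "s \<in> {0,1}" "\<theta> = theta n a s"
          using proper_surj[OF n] by blast
        then show "\<theta> \<in> h ` carrier (semidirect_Zm_Z2 (2 * n))"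
          unfolding h_def carS by (intro image_eqI[of _ _ "(a, s)"]) auto
      qed
    qed
  qed
  have "h \<in> iso (semidirect_Zm_Z2 (2 * n)) (proper_group n)"
    using hom bij by (rule isoI)
  then have "inv_into (carrier (semidirect_Zm_Z2 (2 * n))) h \<in> iso (proper_group n) (semidirect_Zm_Z2 (2 * n))"
    using cl by (rule iso_sym_plain)
  then show ?thesis by (rule is_isoI)
qed

end
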